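(* Let $d,n\ge 1$, let $\eta\in\mathbb{R}$, and let $S=\{(\mathbf{x}^S_i,y^S_i)\}_{i=1}^{|S|}$ and $T=\{(\mathbf{x}^T_j,y^T_j)\}_{j=1}^{|T|}$ be datasets with $\mathbf{x}\in\mathbb{R}^d$, $y\in\mathbb{R}$, where $n=|S|$. For a dataset $D$ and weights $\mathbf{w}\in\mathbb{R}^{|D|}$ define the loss $\mathcal{L}(\boldsymbol{\theta};D,\mathbf{w})=\sum_{i=1}^{|D|}w_i(\langle\mathbf{x}^D_i,\boldsymbol{\theta}\rangle-y^D_i)^2$ for $\boldsymbol{\theta}\in\mathbb{R}^d$. Let $\mathbf{g}_T(\boldsymbol{\theta})=\nabla_{\boldsymbol{\theta}}\mathcal{L}(\boldsymbol{\theta};T,\mathbb{1})$, $\mathbf{H}_T=\nabla^2_{\boldsymbol{\theta}}\mathcal{L}(\boldsymbol{\theta};T,\mathbb{1})$, $\mathbf{g}_{\mathbf{w}}(\boldsymbol{\theta})=\nabla_{\boldsymbol{\theta}}\mathcal{L}(\boldsymbol{\theta};S,\mathbf{w})$ and $\mathbf{H}_{\mathbf{w}}=\nabla^2_{\boldsymbol{\theta}}\mathcal{L}(\boldsymbol{\theta};S,\mathbf{w})$ (the Hessians do not depend on $\boldsymbol{\theta}$). Let $\mathbf{G}_S(\boldsymbol{\theta})\in\mathbb{R}^{n\times d}$ be the matrix whose $i$-th row is $\nabla_{\boldsymbol{\theta}}(\langle\mathbf{x}^S_i,\boldsymbol{\theta}\rangle-y^S_i)^2$, and define $\mathbf{p}(\boldsymbol{\theta})=\mathbf{G}_S(\boldsymbol{\theta})\mathbf{g}_T(\boldsymbol{\theta})$,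 $\mathbf{Q}(\boldsymbol{\theta})=\mathbf{G}_S(\boldsymbol{\theta})\mathbf{H}_T\mathbf{G}_S(\boldsymbol{\theta})^T$ and $f(\mathbf{w};\boldsymbol{\theta})=-\mathbf{p}(\boldsymbol{\theta})^T\mathbf{w}+\frac{\eta}{2}\mathbf{w}^T\mathbf{Q}(\boldsymbol{\theta})\mathbf{w}$. Define $\mathbf{a}_{\mathbf{w}}=-\mathbf{H}_{\mathbf{w}}\mathbf{g}_T(\boldsymbol{\theta})-\mathbf{H}_T\mathbf{g}_{\mathbf{w}}(\boldsymbol{\theta})+\eta\mathbf{H}_{\mathbf{w}}\mathbf{H}_T\mathbf{g}_{\mathbf{w}}(\boldsymbol{\theta})$ and $\mathbf{B}_{\mathbf{w}}=-\mathbf{H}_T\mathbf{H}_{\mathbf{w}}+\frac{\eta}{2}\mathbf{H}_{\mathbf{w}}\mathbf{H}_T\mathbf{H}_{\mathbf{w}}$. Then for all $\boldsymbol{\theta},\boldsymbol{\delta}\in\mathbb{R}^d$ and $\mathbf{w}\in\mathbb{R}^n$, $f(\mathbf{w};\boldsymbol{\theta}+\boldsymbol{\delta})=f(\mathbf{w};\boldsymbol{\theta})+\mathbf{a}_{\mathbf{w}}^T\boldsymbol{\delta}+\boldsymbol{\delta}^T\mathbf{B}_{\mathbf{w}}\boldsymbol{\delta}$.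
   Context: $\mathbb{1}$ denotes the all-ones vector of the appropriate length. The quantities $\mathbf{g}_{\mathbf{w}}$, $\mathbf{a}_{\mathbf{w}}$, $\mathbf{B}_{\mathbf{w}}$ are evaluated at the base point $\boldsymbol{\theta}$. *)

theory Defs
  imports "HOL-Analysis.Analysis"
begin

text \<open>A dataset with index type 'i is given by features x :: 'i => real^'d and labels y :: 'i => real.
  Weights are vectors w :: real^'i.\<close>

definition wloss :: "('i::finite \<Rightarrow> real^'d) \<Rightarrow> ('i \<Rightarrow> real) \<Rightarrow> real^'i \<Rightarrow> real^'d \<Rightarrow> real" where
  "wloss x y w \<theta> = (\<Sum>i\<in>UNIV. w $ i * (x i \<bullet> \<theta> - y i)^2)"

definition grad :: "(real^'d \<Rightarrow> real) \<Rightarrow> real^'d \<Rightarrow> real^'d" where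
  "grad f \<theta> = (\<chi> k. frechet_derivative f (at \<theta>) (axis k 1))"

definition hess :: "(real^'d \<Rightarrow> real) \<Rightarrow> real^'d \<Rightarrow> real^'d^'d" where
  "hess f \<theta> = matrix (frechet_derivative (grad f) (at \<theta>))"

definition GS :: "('n::finite \<Rightarrow> real^'d) \<Rightarrow> ('n \<Rightarrow> real) \<Rightarrow> real^'d \<Rightarrow> real^'d^'n" where
  "GS xS yS \<theta> = (\<chi> i. grad (\<lambda>t. (xS i \<bullet> t - yS i)^2) \<theta>)"

definition gT :: "('m::finite \<Rightarrow> real^'d) \<Rightarrow> ('m \<Rightarrow> real) \<Rightarrow> real^'d \<Rightarrow> real^'d" where
  "gT xT yT \<theta> = grad (wloss xT yT (vec 1)) \<theta>"

definition HT :: "('m::finite \<Rightarrow> real^'d) \<Rightarrow> ('m \<Rightarrow> real) \<Rightarrow> real^'d \<Rightarrow> real^'d^'d" where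
  "HT xT yT \<theta> = hess (wloss xT yT (vec 1)) \<theta>"

definition gw :: "('n::finite \<Rightarrow> real^'d) \<Rightarrow> ('n \<Rightarrow> real) \<Rightarrow> real^'n \<Rightarrow> real^'d \<Rightarrow> real^'d" where
  "gw xS yS w \<theta> = grad (wloss xS yS w) \<theta>"

definition Hw :: "('n::finite \<Rightarrow> real^'d) \<Rightarrow> ('n \<Rightarrow> real) \<Rightarrow> real^'n \<Rightarrow> real^'d \<Rightarrow> real^'d^'d" where
  "Hw xS yS w \<theta> = hess (wloss xS yS w) \<theta>"

definition pvec :: "('n::finite \<Rightarrow> real^'d) \<Rightarrow> ('n \<Rightarrow> real) \<Rightarrow> ('m::finite \<Rightarrow> real^'d) \<Rightarrow> ('m \<Rightarrow> real) \<Rightarrow> real^'d \<Rightarrow> real^'n" where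
  "pvec xS yS xT yT \<theta> = GS xS yS \<theta> *v gT xT yT \<theta>"

definition Qmat :: "('n::finite \<Rightarrow> real^'d) \<Rightarrow> ('n \<Rightarrow> real) \<Rightarrow> ('m::finite \<Rightarrow> real^'d) \<Rightarrow> ('m \<Rightarrow> real) \<Rightarrow> real^'d \<Rightarrow> real^'n^'n" where
  "Qmat xS yS xT yT \<theta> = GS xS yS \<theta> ** HT xT yT \<theta> ** transpose (GS xS yS \<theta>)"

definition fobj :: "real \<Rightarrow> ('n::finite \<Rightarrow> real^'d) \<Rightarrow> ('n \<Rightarrow> real) \<Rightarrow> ('m::finite \<Rightarrow> real^'d) \<Rightarrow> ('m \<Rightarrow> real) \<Rightarrow> real^'n \<Rightarrow> real^'d \<Rightarrow> real" where
  "fobj \<eta> xS yS xT yT w \<theta> =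
     - (pvec xS yS xT yT \<theta> \<bullet> w) + (\<eta> / 2) * (w \<bullet> (Qmat xS yS xT yT \<theta> *v w))"

definition avec :: "real \<Rightarrow> ('n::finite \<Rightarrow> real^'d) \<Rightarrow> ('n \<Rightarrow> real) \<Rightarrow> ('m::finite \<Rightarrow> real^'d) \<Rightarrow> ('m \<Rightarrow> real) \<Rightarrow> real^'n \<Rightarrow> real^'d \<Rightarrow> real^'d" where
  "avec \<eta> xS yS xT yT w \<theta> =
     - (Hw xS yS w \<theta> *v gT xT yT \<theta>) - (HT xT yT \<theta> *v gw xS yS w \<theta>)
     + \<eta> *\<^sub>R ((Hw xS yS w \<theta> ** HT xT yT \<theta>) *v gw xS yS w \<theta>)"

definition Bmat :: "real \<Rightarrow> ('n::finite \<Rightarrow> real^'d) \<Rightarrow> ('n \<Rightarrow> real) \<Rightarrow> ('m::finite \<Rightarrow> real^'d) \<Rightarrow> ('m \<Rightarrow> real) \<Rightarrow> real^'n \<Rightarrow> real^'d \<Rightarrow> real^'d^'d" where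
  "Bmat \<eta> xS yS xT yT w \<theta> =
     - (HT xT yT \<theta> ** Hw xS yS w \<theta>)
     + (\<eta> / 2) *\<^sub>R (Hw xS yS w \<theta> ** HT xT yT \<theta> ** Hw xS yS w \<theta>)"

end

theory Submission imports Defs begin

lemma grad_sq: "grad (\<lambda>t. ((a::real^'d) \<bullet> t - b)^2) \<theta> = (2*(a \<bullet> \<theta> - b)) *\<^sub>R a"
proof -
  have "((\<lambda>t. (a \<bullet> t - b)^2) has_derivative (\<lambda>h. 2*(a \<bullet> \<theta> - b)*(a \<bullet> h))) (at \<theta>)"
    by (auto intro!: derivative_eq_intros)
  from frechet_derivative_at[OF this, symmetric] show ?thesis
    by (simp add: grad_def vec_eq_iff inner_axis)
qed

lemma wloss_deriv: "(wloss x y w has_derivative (\<lambda>h. \<Sum>i\<in>UNIV. 2 * w$i * (x i \<bullet> \<theta> - y i) * (x i \<bullet> h))) (at \<theta>)"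
  unfolding wloss_def
  by (auto intro!: derivative_eq_intros ext sum.cong)

lemma grad_wloss: "grad (wloss x y w) \<theta> = (\<Sum>i\<in>UNIV. (2 * w$i * (x i \<bullet> \<theta> - y i)) *\<^sub>R x i)"
proof -
  have D: "frechet_derivative (wloss x y w) (at \<theta>) = (\<lambda>h. \<Sum>i\<in>UNIV. 2 * w$i * (x i \<bullet> \<theta> - y i) * (x i \<bullet> h))"
    by (rule frechet_derivative_at[OF wloss_deriv, symmetric])
  show ?thesis
    by (simp add: grad_def D vec_eq_iff inner_axis sum_component)
qed

lemma grad_deriv: "((\<lambda>t. \<Sum>i\<in>UNIV. (2 * w$i * (x i \<bullet> t - y i)) *\<^sub>R x i) has_derivative
   (\<lambda>h. \<Sum>i\<in>UNIV. (2 * w$i * (x i \<bullet> h)) *\<^sub>R x i)) (at \<theta>)"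
  by (auto intro!: derivative_eq_intros ext sum.cong simp: algebra_simps)

lemma hess_wloss: "hess (wloss x y w) \<theta> = (\<chi> a b. \<Sum>i\<in>UNIV. 2 * w$i * x i $ a * x i $ b)"
proof -
  have e: "grad (wloss x y w) = (\<lambda>t. \<Sum>i\<in>UNIV. (2 * w$i * (x i \<bullet> t - y i)) *\<^sub>R x i)"
    by (rule ext) (simp add: grad_wloss)
  have D: "frechet_derivative (grad (wloss x y w)) (at \<theta>) = (\<lambda>h. \<Sum>i\<in>UNIV. (2 * w$i * (x i \<bullet> h)) *\<^sub>R x i)"
    unfolding e by (rule frechet_derivative_at[OF grad_deriv, symmetric])
  show ?thesis
    unfolding hess_def D
    by (simp add: matrix_def vec_eq_iff inner_axis sum_component mult.commute mult.left_commute)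
qed

lemma hess_const: "hess (wloss x y w) \<theta> = hess (wloss x y w) \<theta>'"
  by (simp add: hess_wloss)

lemma hess_sym: "transpose (hess (wloss x y w) \<theta>) = hess (wloss x y w) \<theta>"
  by (simp add: hess_wloss transpose_def vec_eq_iff mult.commute mult.left_commute)

lemma grad_shift: "grad (wloss x y w) (\<theta>+\<delta>) = grad (wloss x y w) \<theta> + hess (wloss x y w) \<theta> *v \<delta>"
proof -
  have "\<And>k. (\<Sum>i\<in>UNIV. 2 * w$i * (x i \<bullet> (\<theta>+\<delta>) - y i) * x i $ k) =
      (\<Sum>i\<in>UNIV. 2 * w$i * (x i \<bullet> \<theta> - y i) * x i $ k) + (\<Sum>b\<in>UNIV. (\<Sum>i\<in>UNIV. 2 * w$i * x i $ k * x i $ b) * \<delta> $ b)"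
  proof -
    fix k
    have "(\<Sum>i\<in>UNIV. 2 * w$i * (x i \<bullet> (\<theta>+\<delta>) - y i) * x i $ k) =
      (\<Sum>i\<in>UNIV. 2 * w$i * (x i \<bullet> \<theta> - y i) * x i $ k) + (\<Sum>i\<in>UNIV. 2 * w$i * (x i \<bullet> \<delta>) * x i $ k)"
      by (simp add: sum.distrib[symmetric] inner_add_right algebra_simps)
    also have "(\<Sum>i\<in>UNIV. 2 * w$i * (x i \<bullet> \<delta>) * x i $ k) = (\<Sum>i\<in>UNIV. \<Sum>b\<in>UNIV. 2 * w$i * x i $ k * x i $ b * \<delta> $ b)"
      by (simp add: inner_vec_def sum_distrib_left sum_distrib_right algebra_simps)
    also have "\<dots> = (\<Sum>b\<in>UNIV. (\<Sum>i\<in>UNIV. 2 * w$i * x i $ k * x i $ b) * \<delta> $ b)"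
      by (subst sum.swap) (simp add: sum_distrib_right)
    finally show "?thesis k" .
  qed
  then show ?thesis
    by (simp add: grad_wloss hess_wloss vec_eq_iff sum_component matrix_vector_mult_def mult.assoc)
qed

lemma GS_w: "w v* GS xS yS \<theta> = gw xS yS w \<theta>"
  by (simp add: GS_def gw_def grad_sq grad_wloss vec_eq_iff vector_matrix_mult_def sum_component algebra_simps)

lemma tr_inner: "(A *v u) \<bullet> (v::real^'n) = u \<bullet> (transpose A *v v)"
  by (metis dot_lmul_matrix inner_commute vector_transpose_matrix)

lemma mv_addM: "((A::real^'a^'b) + B) *v x = A *v x + B *v x"
  by (simp add: matrix_vector_mult_def vec_eq_iff algebra_simps sum.distrib)
lemma mv_diffM: "((A::real^'a^'b) - B) *v x = A *v x - B *v x"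
  by (simp add: matrix_vector_mult_def vec_eq_iff algebra_simps sum_subtractf)
lemma mv_negM: "(- (A::real^'a^'b)) *v x = - (A *v x)"
  by (simp add: matrix_vector_mult_def vec_eq_iff sum_negf)
lemma mv_scaleM: "(c *\<^sub>R (A::real^'a^'b)) *v x = c *\<^sub>R (A *v x)"
  by (simp add: matrix_vector_mult_def vec_eq_iff sum_distrib_left algebra_simps)
lemma mv_add: "(A::real^'a^'b) *v (x + y) = A *v x + A *v y"
  by (simp add: matrix_vector_mult_def vec_eq_iff algebra_simps sum.distrib)
lemma mv_neg: "(A::real^'a^'b) *v (- x) = - (A *v x)"
  by (simp add: matrix_vector_mult_def vec_eq_iff sum_negf)
lemma mv_scale: "(A::real^'a^'b) *v (c *\<^sub>R x) = c *\<^sub>R (A *v x)"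
  by (simp add: matrix_vector_mult_def vec_eq_iff sum_distrib_left algebra_simps)

lemma fobj_eq: "fobj \<eta> xS yS xT yT w t =
   - (gT xT yT t \<bullet> gw xS yS w t) + (\<eta>/2) * (gw xS yS w t \<bullet> (HT xT yT t *v gw xS yS w t))"
proof -
  have 1: "pvec xS yS xT yT t \<bullet> w = gT xT yT t \<bullet> gw xS yS w t"
    unfolding pvec_def by (metis GS_w dot_lmul_matrix inner_commute)
  have 2: "w \<bullet> (Qmat xS yS xT yT t *v w) = gw xS yS w t \<bullet> (HT xT yT t *v gw xS yS w t)"
    unfolding Qmat_def
    by (metis GS_w dot_lmul_matrix matrix_vector_mul_assoc transpose_matrix_vector)
  show ?thesis unfolding fobj_def 1 2 ..
qed

theorem lemma1:
  fixes \<eta> :: real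
    and xS :: "'n::finite \<Rightarrow> real^'d" and yS :: "'n \<Rightarrow> real"
    and xT :: "'m::finite \<Rightarrow> real^'d" and yT :: "'m \<Rightarrow> real"
    and w :: "real^'n" and \<theta> \<delta> :: "real^'d"
  shows "fobj \<eta> xS yS xT yT w (\<theta> + \<delta>) =
           fobj \<eta> xS yS xT yT w \<theta> + avec \<eta> xS yS xT yT w \<theta> \<bullet> \<delta>
           + \<delta> \<bullet> (Bmat \<eta> xS yS xT yT w \<theta> *v \<delta>)"
proof -
  define g where "g = gw xS yS w \<theta>"
  define G where "G = gT xT yT \<theta>"
  define M where "M = HT xT yT \<theta>"
  define N where "N = Hw xS yS w \<theta>"
  define d where "d = \<delta>"
  have Mc: "HT xT yT (\<theta>+\<delta>) = M" unfolding M_def HT_def by (rule hess_const)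
  have g': "gw xS yS w (\<theta>+\<delta>) = g + N *v d" unfolding g_def N_def d_def gw_def Hw_def by (rule grad_shift)
  have G': "gT xT yT (\<theta>+\<delta>) = G + M *v d" unfolding G_def M_def d_def gT_def HT_def by (rule grad_shift)
  have Ms: "transpose M = M" unfolding M_def HT_def by (rule hess_sym)
  have Ns: "transpose N = N" unfolding N_def Hw_def by (rule hess_sym)
  have sM: "\<And>u v. (M *v u) \<bullet> v = u \<bullet> (M *v v)" using tr_inner Ms by metis
  have sN: "\<And>u v. (N *v u) \<bullet> v = u \<bullet> (N *v v)" using tr_inner Ns by metis
  have e1: "G \<bullet> (N *v d) = (N *v G) \<bullet> d" by (metis sN inner_commute)
  have e2: "(M *v d) \<bullet> g = (M *v g) \<bullet> d" by (metis sM inner_commute)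
  have e3: "(M *v d) \<bullet> (N *v d) = d \<bullet> (M *v (N *v d))" by (metis sM)
  have e4: "g \<bullet> (M *v (N *v d)) = (N *v (M *v g)) \<bullet> d" by (metis sM sN inner_commute)
  have e5: "(N *v d) \<bullet> (M *v g) = (N *v (M *v g)) \<bullet> d" by (metis sN inner_commute)
  have e6: "(N *v d) \<bullet> (M *v (N *v d)) = d \<bullet> (N *v (M *v (N *v d)))" by (metis sN)
  have L: "fobj \<eta> xS yS xT yT w (\<theta> + \<delta>) = - ((G + M *v d) \<bullet> (g + N *v d)) + (\<eta>/2) * ((g + N *v d) \<bullet> (M *v (g + N *v d)))"
    by (simp add: fobj_eq Mc g' G')
  have R: "fobj \<eta> xS yS xT yT w \<theta> + avec \<eta> xS yS xT yT w \<theta> \<bullet> \<delta> + \<delta> \<bullet> (Bmat \<eta> xS yS xT yT w \<theta> *v \<delta>)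
     = - (G \<bullet> g) + (\<eta>/2) * (g \<bullet> (M *v g)) + (- (N *v G) - (M *v g) + \<eta> *\<^sub>R (N *v (M *v g))) \<bullet> d
       + d \<bullet> (- (M *v (N *v d)) + (\<eta>/2) *\<^sub>R (N *v (M *v (N *v d))))"
    unfolding fobj_eq avec_def Bmat_def
    by (simp add: g_def G_def M_def N_def d_def matrix_vector_mul_assoc[symmetric] mv_addM mv_diffM mv_negM mv_scaleM)
  show ?thesis unfolding L R
    by (simp add: inner_add_left inner_add_right inner_diff_left inner_diff_right mv_add mv_neg mv_scale
        e1 e2 e3 e4 e5 e6 algebra_simps)
qed

end
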